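(* Let $m>0$, $\sigma>0$, and let $\theta$ be the distribution of $|X|$ where $X$ follows the normal law $\mathcal{N}(m,\sigma^2)$, with density $f_\theta(t)=\frac{1}{\sigma\sqrt{2\pi}}\left[\exp\left(-\frac12\left(\frac{t-m}{\sigma}\right)^2\right)+\exp\left(-\frac12\left(\frac{t+m}{\sigma}\right)^2\right)\right]$ for $t\ge0$. Then there exists $t^*\in[0,m)$ such that $f'_\theta(t)>0$ for all $t\in(0,t^* )$ and $f'_\theta(t)<0$ for all $t\in(t^*,\infty)$. Moreover, such $t^*$ satisfies $(t^* )^2\geq m^2-\sigma^2$. *)

theory Defs
  imports "HOL-Analysis.Analysis"
begin

text \<open>Density of the folded normal distribution |X|, X ~ N(m, sigma^2), on t \<ge> 0.
  The same closed-form expression is used for all real t (it is smooth everywhere);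
  only t > 0 matters for the statement.\<close>
definition folded_normal_density :: "real \<Rightarrow> real \<Rightarrow> real \<Rightarrow> real" where
  "folded_normal_density m \<sigma> t =
     (1 / (\<sigma> * sqrt (2 * pi))) *
     (exp (- (1/2) * ((t - m) / \<sigma>)^2) + exp (- (1/2) * ((t + m) / \<sigma>)^2))"

end

theory Submission imports Defs begin
lemma d0: assumes "s > 0"
  shows "((\<lambda>t. - (1/2) * ((t - c) / s)^2) has_real_derivative -(t-c)/s^2) (at t)"
  using assms by (auto intro!: derivative_eq_intros simp: power2_eq_square field_simps)
lemma d1: assumes "s > 0"
  shows "((\<lambda>t. exp (- (1/2) * ((t - c) / s)^2)) has_real_derivative
     exp (- (1/2) * ((t - c) / s)^2) * (-(t-c)/s^2)) (at t)"
  using DERIV_chain2[OF DERIV_exp d0[OF assms]] .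

lemma alg: fixes A B C E s t m :: real
  assumes "A = B*E" "s \<noteq> 0"
  shows "C*(A*(-(t-m)/s^2) + B*(-(t+m)/s^2)) = C/s^2*B*((m-t)*E-(m+t))"
  using assms by (simp add: field_simps)

lemma deriv_eq: assumes "s > 0"
  shows "deriv (folded_normal_density m s) t =
    (1 / (s * sqrt (2 * pi))) / s^2 * exp (- (1/2) * ((t + m) / s)^2) *
    ((m-t)*exp(2*t*m/s^2) - (m+t))"
proof -
  have e1: "((\<lambda>t. exp (- (1/2) * ((t + m) / s)^2)) has_real_derivative
     exp (- (1/2) * ((t + m) / s)^2) * (-(t+m)/s^2)) (at t)"
    using d1[OF assms, of "-m" t] by simp
  have "(folded_normal_density m s has_real_derivative
     (1 / (s * sqrt (2 * pi))) * (exp (- (1/2) * ((t - m) / s)^2) * (-(t-m)/s^2) + exp (- (1/2) * ((t + m) / s)^2) * (-(t+m)/s^2))) (at t)"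
    unfolding folded_normal_density_def[abs_def]
    by (intro DERIV_cmult DERIV_add d1 e1 assms)
  hence D: "deriv (folded_normal_density m s) t = (1 / (s * sqrt (2 * pi))) * (exp (- (1/2) * ((t - m) / s)^2) * (-(t-m)/s^2) + exp (- (1/2) * ((t + m) / s)^2) * (-(t+m)/s^2))"
    by (rule DERIV_imp_deriv)
  moreover have X: "exp (- (1/2) * ((t - m) / s)^2) = exp (- (1/2) * ((t + m) / s)^2) * exp(2*t*m/s^2)"
  proof -
    have "- (1/2) * ((t - m) / s)^2 = - (1/2) * ((t + m) / s)^2 + 2*t*m/s^2"
      using assms by (simp add: field_simps power2_eq_square)
    hence "exp (- (1/2) * ((t - m) / s)^2) = exp (- (1/2) * ((t + m) / s)^2 + 2*t*m/s^2)" by (rule arg_cong)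
    thus ?thesis by (simp only: exp_add)
  qed
  ultimately show ?thesis unfolding D using assms by (intro alg X) auto
qed

lemma G_k: fixes m s t :: real assumes "0 \<le> t" "t < m" "s > 0"
  shows "((m-t)*exp(2*t*m/s^2) - (m+t) > 0 \<longleftrightarrow> ln(m+t) - ln(m-t) - 2*t*m/s^2 < 0)"
    and "((m-t)*exp(2*t*m/s^2) - (m+t) < 0 \<longleftrightarrow> ln(m+t) - ln(m-t) - 2*t*m/s^2 > 0)"
proof -
  have p: "(m-t)*exp(2*t*m/s^2) > 0" "m + t > 0" using assms by auto
  have l: "ln ((m-t)*exp(2*t*m/s^2)) = ln(m-t) + 2*t*m/s^2" using assms by (simp add: ln_mult)
  show "((m-t)*exp(2*t*m/s^2) - (m+t) > 0 \<longleftrightarrow> ln(m+t) - ln(m-t) - 2*t*m/s^2 < 0)"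
    using ln_less_cancel_iff[OF p(2) p(1)] l by linarith
  show "((m-t)*exp(2*t*m/s^2) - (m+t) < 0 \<longleftrightarrow> ln(m+t) - ln(m-t) - 2*t*m/s^2 > 0)"
    using ln_less_cancel_iff[OF p(1) p(2)] l by linarith
qed

lemma k_deriv: fixes m s t :: real assumes "0 \<le> t" "t < m" "s > 0"
  shows "((\<lambda>t. ln(m+t) - ln(m-t) - 2*t*m/s^2) has_real_derivative
          2*m/(m^2-t^2) - 2*m/s^2) (at t)"
proof -
  have "((\<lambda>t. ln(m+t) - ln(m-t) - 2*t*m/s^2) has_real_derivative
          1/(m+t) - (-1)/(m-t) - 2*m/s^2) (at t)"
  proof (intro DERIV_diff)
    show "((\<lambda>t. ln (m + t)) has_real_derivative 1 / (m + t)) (at t)"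
      using assms by (auto intro!: derivative_eq_intros)
    show "((\<lambda>t. ln (m - t)) has_real_derivative - 1 / (m - t)) (at t)"
      using assms by (auto intro!: derivative_eq_intros)
    have "((\<lambda>t. (2*m/s^2) * t) has_real_derivative (2*m/s^2) * 1) (at t)"
      by (intro DERIV_cmult DERIV_ident)
    thus "((\<lambda>t. 2*t*m/s^2) has_real_derivative 2*m/s^2) (at t)"
      by (simp add: field_simps)
  qed
  moreover have "1/(m+t) - (-1)/(m-t) - 2*m/s^2 = 2*m/(m^2-t^2) - 2*m/s^2"
    using assms by (simp add: field_simps power2_eq_square)
  ultimately show ?thesis by simp
qed
lemma sign_deriv: fixes m s t :: real assumes "s > 0"
  shows "deriv (folded_normal_density m s) t > 0 \<longleftrightarrow> (m-t)*exp(2*t*m/s^2) - (m+t) > 0"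
    and "deriv (folded_normal_density m s) t < 0 \<longleftrightarrow> (m-t)*exp(2*t*m/s^2) - (m+t) < 0"
proof -
  have c: "(1 / (s * sqrt (2 * pi))) / s^2 * exp (- (1/2) * ((t + m) / s)^2) > 0"
    using assms by simp
  show "deriv (folded_normal_density m s) t > 0 \<longleftrightarrow> (m-t)*exp(2*t*m/s^2) - (m+t) > 0"
    unfolding deriv_eq[OF assms] using c zero_less_mult_iff by smt
  show "deriv (folded_normal_density m s) t < 0 \<longleftrightarrow> (m-t)*exp(2*t*m/s^2) - (m+t) < 0"
    unfolding deriv_eq[OF assms] using c mult_less_0_iff by smt
qed

theorem mainTheorem3:
  fixes m \<sigma> :: real
  assumes "m > 0" and "\<sigma> > 0"
  shows "(\<exists>ts. 0 \<le> ts \<and> ts < m \<and>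
            (\<forall>t. 0 < t \<and> t < ts \<longrightarrow> deriv (folded_normal_density m \<sigma>) t > 0) \<and>
            (\<forall>t. ts < t \<longrightarrow> deriv (folded_normal_density m \<sigma>) t < 0))
       \<and> (\<forall>ts. 0 \<le> ts \<and> ts < m \<and>
            (\<forall>t. 0 < t \<and> t < ts \<longrightarrow> deriv (folded_normal_density m \<sigma>) t > 0) \<and>
            (\<forall>t. ts < t \<longrightarrow> deriv (folded_normal_density m \<sigma>) t < 0)
            \<longrightarrow> ts^2 \<ge> m^2 - \<sigma>^2)"
proof -
  define s where "s = \<sigma>"
  have s: "s > 0" using assms s_def by simp
  define k where "k = (\<lambda>t. ln(m+t) - ln(m-t) - 2*t*m/s^2)"
  define F where "F = deriv (folded_normal_density m \<sigma>)"
  have Fpos: "F t > 0 \<longleftrightarrow> k t < 0" "F t < 0 \<longleftrightarrow> k t > 0" if "0 \<le> t" "t < m" for t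
    unfolding F_def k_def s_def using sign_deriv[OF assms(2)] G_k[OF that assms(2)] by auto
  have Fneg: "F t < 0" if "m \<le> t" for t
  proof -
    have "(m-t)*exp(2*t*m/s^2) \<le> 0" using that by (simp add: mult_nonpos_nonneg)
    thus ?thesis unfolding F_def using sign_deriv[OF assms(2)] that assms(1) s_def by force
  qed
  have kd: "DERIV k t :> 2*m/(m^2-t^2) - 2*m/s^2" if "0 \<le> t" "t < m" for t
    unfolding k_def using k_deriv[OF that s] .
  have kc: "continuous_on {a..b} k" if "0 \<le> a" "b < m" for a b
  proof (rule continuous_at_imp_continuous_on, intro ballI)
    fix x assume "x \<in> {a..b}"
    then show "isCont k x" using kd[of x] DERIV_isCont that by auto
  qed
  have k0: "k 0 = 0" unfolding k_def by simp
  have inc: "k a < k b" if "0 \<le> a" "a < b" "b < m" "m^2 - s^2 \<le> a^2" for a b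
  proof (rule DERIV_pos_imp_increasing_open[OF that(2) _ kc[OF that(1,3)]])
    fix x assume x: "a < x" "x < b"
    have "x^2 > a^2" using x that by (simp add: power_strict_mono)
    hence "m^2 - x^2 < s^2" using that by linarith
    moreover have "m^2 - x^2 > 0" using x that by (simp add: power_strict_mono)
    ultimately have "2*m/(m^2-x^2) > 2*m/s^2" using assms(1) by (simp add: frac_less2)
    thus "\<exists>y. DERIV k x :> y \<and> y > 0" using kd[of x] x that by force
  qed
  have dec: "k x < 0" if "0 < x" "x^2 \<le> m^2 - s^2" for x
  proof -
    have xm: "x < m" using that s assms(1)
      by (smt (verit) power2_less_0 power_mono zero_less_power)
    have "k 0 > k x"
    proof (rule DERIV_neg_imp_decreasing_open[OF that(1) _ kc[of 0 x]])
      fix y assume y: "0 < y" "y < x"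
      have "y^2 < x^2" using y by (simp add: power_strict_mono)
      hence "m^2 - y^2 > s^2" using that by linarith
      moreover have "s^2 > 0" using s by simp
      ultimately have "2*m/(m^2-y^2) < 2*m/s^2" using assms(1) by (simp add: frac_less2)
      thus "\<exists>z. DERIV k y :> z \<and> z < 0" using kd[of y] y xm by force
    qed (use xm in auto)
    thus ?thesis using k0 by simp
  qed
  have P2: "ts^2 \<ge> m^2 - \<sigma>^2" if "0 \<le> ts" "\<forall>t. ts < t \<longrightarrow> F t < 0" for ts
  proof (rule ccontr)
    assume "\<not> ?thesis"
    hence lt: "ts^2 < m^2 - s^2" using s_def by simp
    define t0 where "t0 = sqrt (m^2 - s^2)"
    have t0sq: "t0^2 = m^2 - s^2" unfolding t0_def using lt
      by (smt (verit) real_sqrt_pow2 zero_le_power2)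
    have "ts < t0" unfolding t0_def using lt that(1)
      by (metis real_sqrt_less_mono real_sqrt_unique)
    hence "F t0 < 0" using that by auto
    moreover have t0m: "t0 < m" using t0sq s assms(1)
      by (smt (verit) power2_less_0 power_mono zero_less_power \<open>ts < t0\<close> that(1))
    ultimately have "k t0 > 0" using Fpos[of t0] \<open>ts < t0\<close> that(1) by auto
    moreover have "k t0 < 0" using dec[of t0] t0sq \<open>ts < t0\<close> that(1) by auto
    ultimately show False by simp
  qed
  have P1: "\<exists>ts. 0 \<le> ts \<and> ts < m \<and> (\<forall>t. 0 < t \<and> t < ts \<longrightarrow> F t > 0) \<and> (\<forall>t. ts < t \<longrightarrow> F t < 0)"
  proof (cases "m \<le> s")
    case True
    have "F t < 0" if "0 < t" for t
    proof (cases "m \<le> t")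
      case True thus ?thesis using Fneg by simp
    next
      case False
      have "k 0 < k t"
      proof (rule DERIV_pos_imp_increasing_open[OF that _ kc[of 0 t]])
        fix y assume y: "0 < y" "y < t"
        have "m^2 - y^2 < s^2" using y \<open>m \<le> s\<close> assms(1)
          by (smt (verit) power_mono zero_less_power)
        moreover have "m^2 - y^2 > 0" using y False that
          by (simp add: power_strict_mono)
        ultimately have "2*m/(m^2-y^2) > 2*m/s^2" using assms(1) by (simp add: frac_less2)
        thus "\<exists>z. DERIV k y :> z \<and> z > 0" using kd[of y] y False by force
      qed (use False in auto)
      thus ?thesis using Fpos[of t] k0 False that by auto
    qed
    thus ?thesis using assms(1) by (intro exI[of _ 0]) auto
  next
    case False
    define t0 where "t0 = sqrt (m^2 - s^2)"
    have lt: "0 < m^2 - s^2" using False s by (simp add: power_strict_mono)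
    have t0sq: "t0^2 = m^2 - s^2" unfolding t0_def using lt by simp
    have t0p: "t0 > 0" unfolding t0_def using lt by simp
    have t0m: "t0 < m" using t0sq s assms(1) t0p
      by (smt (verit) power2_less_0 power_mono zero_less_power)
    have kt0: "k t0 < 0" using dec[OF t0p] t0sq by simp
    define e where "e = exp (-(2*m^2/s^2 + 1))"
    have "0 \<le> 2*m^2/s^2" by simp
    hence e: "0 < e" "e < 1" unfolding e_def by (auto, linarith)
    define t1 where "t1 = m - m*e"
    have t1: "0 < t1" "t1 < m" unfolding t1_def using e assms(1) by auto
    have kt1: "k t1 > 0"
    proof -
      have "ln (m - t1) = ln m - (2*m^2/s^2 + 1)" unfolding t1_def e_def using assms(1)
        by (simp add: ln_mult)
      moreover have "ln (m + t1) > ln m" using t1 assms(1) by simp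
      moreover have "2*t1*m/s^2 < 2*m^2/s^2" using t1 s assms(1)
        by (simp add: divide_strict_right_mono power2_eq_square)
      ultimately show ?thesis unfolding k_def by linarith
    qed
    have "t0 < t1"
    proof (rule ccontr)
      assume "\<not> t0 < t1"
      hence "t1^2 \<le> t0^2" using t1 by (simp add: power_mono)
      hence "t1^2 \<le> m^2 - s^2" using t0sq by simp
      thus False using dec[OF t1(1)] kt1 by simp
    qed
    obtain ts where ts: "t0 \<le> ts" "ts \<le> t1" "k ts = 0"
      using IVT'[of k t0 0 t1] kt0 kt1 \<open>t0 < t1\<close> kc[of t0 t1] t0p t1 by auto
    have "ts \<noteq> t0" using ts kt0 by auto
    hence tsgt: "t0 < ts" using ts by simp
    have t0le: "m^2 - s^2 \<le> t0^2" using t0sq by simp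
    show ?thesis
    proof (intro exI[of _ ts] conjI allI impI)
      show "0 \<le> ts" using tsgt t0p by simp
      show "ts < m" using ts t1 by simp
    next
      fix t assume t: "0 < t \<and> t < ts"
      have "k t < 0"
      proof (cases "t \<le> t0")
        case True
        hence "t^2 \<le> t0^2" using t by (simp add: power_mono)
        thus ?thesis using dec[of t] t t0sq by simp
      next
        case False
        hence "t0^2 \<le> t^2" using t0p by (simp add: power_mono)
        hence "m^2 - s^2 \<le> t^2" using t0sq by simp
        thus ?thesis using inc[of t ts] t ts t1 by simp
      qed
      thus "F t > 0" using Fpos[of t] t ts t1 by simp
    next
      fix t assume t: "ts < t"
      show "F t < 0"
      proof (cases "m \<le> t")
        case True thus ?thesis using Fneg by simp
      next
        case False
        have "t0^2 \<le> ts^2" using t0p tsgt by (simp add: power_mono)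
        hence "m^2 - s^2 \<le> ts^2" using t0sq by simp
        hence "k t > 0" using inc[of ts t] t ts t0p tsgt False by simp
        thus ?thesis using Fpos[of t] t tsgt t0p False by simp
      qed
    qed
  qed
  show ?thesis using P1 P2 unfolding F_def by blast
qed
end
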